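(* Let $H\in(3/4,1)$, $\alpha=(1,-1)$ and $v_N:=\mathbf E[V_N(2,(1,-1))^2]$. Then $$N^{4-4H}\,v_N\xrightarrow[N\to\infty]{}\frac{4K_0}{k_1^2},$$ where $k_1=-t/4$, $k_2=\frac{4H-1}{8(2H+1)}$ and $$K_0=\int_0^1\big(k_1H(2H-1)x^{2H-2}+k_2H(2H+1)x^{2H-1}\big)^2(1-x)\,dx=k_1^2\frac{H^2(2H-1)}{2(4H-3)}+2k_1k_2\frac{H^2(2H+1)}{2(4H-1)}+k_2^2\frac{H(2H+1)^2}{4(4H-1)}.$$
   Context: Let $W^H=\{W^H_s(A): s\ge 0, A\in\mathcal B_b(\mathbb R)\}$ be a centered Gaussian field with $\mathbf E[W^H_s(A)W^H_r(B)]=R_H(s,r)\lambda(A\cap B)$, where $R_H(s,r)=\frac12(s^{2H}+r^{2H}-|s-r|^{2H})$ and $\lambda$ is Lebesgue measure. Let $u(t,x)=\int_0^t\int_{\mathbb R}G_1(t-s,x-y)\,W^H(ds,dy)$, with $G_1(t,x)=\frac12\mathbf 1_{\{|x|<t\}}$ (mild solution of the 1D wave equation driven by $\dot W^H$ with zero initial data). Fix $t>1$. For $x,y\in[0,1]$, $\mathbf E[u(t,x)u(t,y)]=\frac12\big(c_H|x-y|^{2H+1}-\frac t2|x-y|^{2H}+\frac{t^{2H+1}}{2H+1}\big)$, $c_H=\frac{4H-1}{4(2H+1)}$. For the filter $\alpha=(1,-1)$ (length 2, order 1), $U^\alpha(i/N)=u(t,i/N)-u(t,(i-1)/N)$ for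 $i=1,\dots,N$, and $V_N(2,(1,-1))=\frac{1}{N-1}\sum_{i=1}^N\big[U^\alpha(i/N)^2/\mathbf E[U^\alpha(i/N)^2]-1\big]$. *)

theory Defs
  imports "HOL-Probability.Probability"
begin

definition c_H :: "real \<Rightarrow> real" where
  "c_H H = (4*H - 1) / (4*(2*H + 1))"

definition u_cov :: "real \<Rightarrow> real \<Rightarrow> real \<Rightarrow> real \<Rightarrow> real" where
  "u_cov H t x y = (1/2) * (c_H H * \<bar>x - y\<bar> powr (2*H + 1) - (t/2) * \<bar>x - y\<bar> powr (2*H)
                          + t powr (2*H + 1) / (2*H + 1))"

text \<open>A centered jointly Gaussian process (X x), x in S, on the probability space M with
  covariance C: every finite linear combination has the Gaussian characteristic function.\<close>
definition centered_gaussian_process ::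
  "'a measure \<Rightarrow> (real \<Rightarrow> 'a \<Rightarrow> real) \<Rightarrow> real set \<Rightarrow> (real \<Rightarrow> real \<Rightarrow> real) \<Rightarrow> bool" where
  "centered_gaussian_process M X S C \<longleftrightarrow>
     (\<forall>x\<in>S. X x \<in> borel_measurable M) \<and>
     (\<forall>(n::nat) (p::nat \<Rightarrow> real) (c::nat \<Rightarrow> real). (\<forall>k<n. p k \<in> S) \<longrightarrow>
        (LINT \<omega>|M. cis (\<Sum>k<n. c k * X (p k) \<omega>)) =
          complex_of_real (exp (-(1/2) * (\<Sum>k<n. \<Sum>l<n. c k * c l * C (p k) (p l)))))"

definition U_alpha :: "(real \<Rightarrow> 'a \<Rightarrow> real) \<Rightarrow> nat \<Rightarrow> nat \<Rightarrow> 'a \<Rightarrow> real" where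
  "U_alpha X N i \<omega> = X (real i / real N) \<omega> - X ((real i - 1) / real N) \<omega>"

definition V_N :: "'a measure \<Rightarrow> (real \<Rightarrow> 'a \<Rightarrow> real) \<Rightarrow> nat \<Rightarrow> 'a \<Rightarrow> real" where
  "V_N M X N \<omega> = (1 / (real N - 1)) *
     (\<Sum>i\<in>{1..N}. (U_alpha X N i \<omega>)\<^sup>2 / (LINT \<omega>'|M. (U_alpha X N i \<omega>')\<^sup>2) - 1)"

definition k1 :: "real \<Rightarrow> real" where "k1 t = - t / 4"
definition k2 :: "real \<Rightarrow> real" where "k2 H = (4*H - 1) / (8*(2*H + 1))"

definition K0 :: "real \<Rightarrow> real \<Rightarrow> real" where
  "K0 H t = (k1 t)\<^sup>2 * (H\<^sup>2 * (2*H - 1)) / (2*(4*H - 3))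
          + 2 * k1 t * k2 H * (H\<^sup>2 * (2*H + 1)) / (2*(4*H - 1))
          + (k2 H)\<^sup>2 * (H * (2*H + 1)\<^sup>2) / (4*(4*H - 1))"

end

theory Submission
  imports Defs
begin



lemma mvt_powr_step:
  fixes k s :: real
  assumes k: "k \<ge> 1" and s: "s > -1"
  shows "\<exists>z. k < z \<and> z < k+1 \<and> (k+1) powr (s+1) - k powr (s+1) = (s+1) * z powr s"
proof -
  have "\<And>x. k \<le> x \<Longrightarrow> x \<le> k+1 \<Longrightarrow> DERIV (\<lambda>x. x powr (s+1)) x :> (s+1) * x powr (s+1-1)"
  proof -
    fix x assume "k \<le> x" "x \<le> k+1"
    then have "x > 0" using k by auto
    then show "DERIV (\<lambda>x. x powr (s+1)) x :> (s+1) * x powr (s+1-1)"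
      by (rule has_real_derivative_powr)
  qed
  from MVT2[of k "k+1", OF _ this] obtain z where "z > k" "z < k+1"
     "(k+1) powr (s+1) - k powr (s+1) = (k+1-k) * ((s+1) * z powr (s+1-1))" by auto
  thus ?thesis by (intro exI[of _ z]) auto
qed

lemma powsum_err:
  fixes s :: real
  assumes s: "s > -1" and n: "n \<ge> 1"
  shows "\<bar>(\<Sum>k=1..n. real k powr s) - real n powr (s+1) / (s+1)\<bar> \<le> real n powr s + 1 + 1/(s+1)"
proof -
  define d where "d k = ((real k+1) powr (s+1) - real k powr (s+1)) / (s+1)" for k :: nat
  have dbd: "min (real k powr s) ((real k+1) powr s) \<le> d k \<and> d k \<le> max (real k powr s) ((real k+1) powr s)"
    if "k \<ge> 1" for k
  proof -
    have k1: "real k \<ge> 1" using that by simp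
    obtain z where z: "real k < z" "z < real k+1" "(real k+1) powr (s+1) - real k powr (s+1) = (s+1) * z powr s"
      using mvt_powr_step[OF k1 s] by blast
    have dz: "d k = z powr s" using z(3) s unfolding d_def by simp
    have kpos: "real k > 0" using that by simp
    show ?thesis
    proof (cases "s \<ge> 0")
      case True
      have "real k powr s \<le> z powr s" using z kpos True by (intro powr_mono2) auto
      moreover have "z powr s \<le> (real k+1) powr s" using z kpos True by (intro powr_mono2) auto
      ultimately show ?thesis using dz by auto
    next
      case False
      have "z powr s \<le> real k powr s" using z kpos False by (intro powr_mono2') auto
      moreover have "(real k+1) powr s \<le> z powr s" using z kpos False by (intro powr_mono2') auto
      ultimately show ?thesis using dz by auto
    qed
  qed
  have tel: "(\<Sum>k=1..<n. d k) = (real n powr (s+1) - 1) / (s+1)"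
    using n
  proof (induction n rule: dec_induct)
    case base then show ?case by simp
  next
    case (step m)
    then show ?case using s by (simp add: d_def add_divide_distrib diff_divide_distrib add.commute)
  qed
  have S1: "(\<Sum>k=1..n. real k powr s) = (\<Sum>k=1..<n. real k powr s) + real n powr s"
    using n by (simp add: atLeastLessThanSuc_atLeastAtMost[symmetric] sum.atLeastLessThan_Suc)
  have S2: "(\<Sum>k=1..<n. (real k+1) powr s) = (\<Sum>k=1..n. real k powr s) - 1"
  proof -
    have "(\<Sum>k=1..<n. (real k+1) powr s) = (\<Sum>k=Suc 1..<Suc n. real k powr s)"
      unfolding sum.shift_bounds_Suc_ivl by (intro sum.cong) (auto simp: add.commute)
    also have "\<dots> = (\<Sum>k=1..n. real k powr s) - 1"
      using n by (simp add: atLeastLessThanSuc_atLeastAtMost sum.atLeast_Suc_atMost)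
    finally show ?thesis .
  qed
  have lo: "(\<Sum>k=1..<n. min (real k powr s) ((real k+1) powr s)) \<le> (\<Sum>k=1..<n. d k)"
    by (intro sum_mono) (use dbd in auto)
  have hi: "(\<Sum>k=1..<n. d k) \<le> (\<Sum>k=1..<n. max (real k powr s) ((real k+1) powr s))"
    by (intro sum_mono) (use dbd in auto)
  have lo2: "min (\<Sum>k=1..<n. real k powr s) (\<Sum>k=1..<n. (real k+1) powr s) \<le> (\<Sum>k=1..<n. d k)"
  proof (cases "s \<ge> 0")
    case True
    have "(\<Sum>k=1..<n. real k powr s) \<le> (\<Sum>k=1..<n. min (real k powr s) ((real k+1) powr s))"
      by (intro sum_mono) (use True in \<open>auto intro!: powr_mono2\<close>)
    thus ?thesis using lo by linarith
  next
    case False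
    have "(\<Sum>k=1..<n. (real k+1) powr s) \<le> (\<Sum>k=1..<n. min (real k powr s) ((real k+1) powr s))"
      by (intro sum_mono) (use False in \<open>auto intro!: powr_mono2'\<close>)
    thus ?thesis using lo by linarith
  qed
  have hi2: "(\<Sum>k=1..<n. d k) \<le> max (\<Sum>k=1..<n. real k powr s) (\<Sum>k=1..<n. (real k+1) powr s)"
  proof (cases "s \<ge> 0")
    case True
    have "(\<Sum>k=1..<n. max (real k powr s) ((real k+1) powr s)) \<le> (\<Sum>k=1..<n. (real k+1) powr s)"
      by (intro sum_mono) (use True in \<open>auto intro!: powr_mono2\<close>)
    thus ?thesis using hi by linarith
  next
    case False
    have "(\<Sum>k=1..<n. max (real k powr s) ((real k+1) powr s)) \<le> (\<Sum>k=1..<n. real k powr s)"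
      by (intro sum_mono) (use False in \<open>auto intro!: powr_mono2'\<close>)
    thus ?thesis using hi by linarith
  qed
  have "real n powr s \<ge> 0" by simp
  have "1/(s+1) > 0" using s by simp
  have e: "real n powr (s+1) / (s+1) = (\<Sum>k=1..<n. d k) + 1/(s+1)"
    using tel s by (simp add: diff_divide_distrib)
  define A where "A = (\<Sum>k=1..<n. real k powr s)"
  define D where "D = (\<Sum>k=1..<n. d k)"
  define P where "P = real n powr s"
  define c where "c = 1/(s+1)"
  have f1: "min A (A + P - 1) \<le> D" "D \<le> max A (A + P - 1)" using lo2 hi2 S2 S1 unfolding A_def D_def P_def by auto
  have f2: "(\<Sum>k=1..n. real k powr s) = A + P" using S1 unfolding A_def P_def by simp
  have f3: "real n powr (s+1) / (s+1) = D + c" using e unfolding D_def c_def .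
  have "\<bar>A + P - (D + c)\<bar> \<le> P + 1 + c"
    using f1 \<open>real n powr s \<ge> 0\<close> \<open>1/(s+1) > 0\<close> unfolding P_def[symmetric] c_def[symmetric]
    by (cases "P \<le> 1") (auto simp: min_def max_def abs_le_iff split: if_splits)
  then show ?thesis using f2 f3 unfolding P_def c_def by simp
qed

lemma npow_neg_lim: "a > 0 \<Longrightarrow> (\<lambda>n::nat. C * real n powr (-a)) \<longlonglongrightarrow> 0"
proof -
  assume a: "a > 0"
  have "(\<lambda>n::nat. real n powr (-a)) \<longlonglongrightarrow> 0"
    using a by (intro tendsto_neg_powr filterlim_real_sequentially) auto
  from tendsto_mult[OF tendsto_const[of C] this] show ?thesis by simp
qed

lemma E_over:
  fixes s :: real assumes s: "s > -1"
  shows "(\<lambda>n. ((\<Sum>k=1..n. real k powr s) - real n powr (s+1)/(s+1)) / real n powr (s+1)) \<longlonglongrightarrow> 0"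
proof (rule Lim_null_comparison)
  let ?g = "\<lambda>n::nat. 1 / real n + (1 + 1/(s+1)) * real n powr (-(s+1))"
  show "?g \<longlonglongrightarrow> 0"
    using tendsto_add[OF lim_inverse_n' npow_neg_lim[of "s+1" "1 + 1/(s+1)"]] s by simp
  show "\<forall>\<^sub>F n in sequentially. norm (((\<Sum>k=1..n. real k powr s) - real n powr (s+1)/(s+1)) / real n powr (s+1)) \<le> ?g n"
    using eventually_ge_at_top[of 1]
  proof eventually_elim
    case (elim n)
    have np: "real n powr (s+1) > 0" using elim by simp
    have "norm (((\<Sum>k=1..n. real k powr s) - real n powr (s+1)/(s+1)) / real n powr (s+1))
        = \<bar>(\<Sum>k=1..n. real k powr s) - real n powr (s+1)/(s+1)\<bar> / real n powr (s+1)"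
      using np by simp
    also have "\<dots> \<le> (real n powr s + 1 + 1/(s+1)) / real n powr (s+1)"
      using powsum_err[OF s elim] np by (intro divide_right_mono) auto
    also have "\<dots> = ?g n"
    proof -
      have a: "real n powr (-(s+1)) = 1 / real n powr (s+1)" by (subst powr_minus) (simp add: divide_inverse)
      have b: "real n powr (s+1) = real n powr s * real n" using elim by (simp add: powr_add)
      show ?thesis unfolding a b using elim by (simp add: field_simps)
    qed
    finally show ?case .
  qed
qed

lemma T_lim:
  fixes s :: real assumes s: "s > -1"
  shows "(\<lambda>n. (\<Sum>k=1..n. (real n - real k) * real k powr s) / real n powr (s+2)) \<longlonglongrightarrow> 1/((s+1)*(s+2))"
proof -
  define E where "E s n = ((\<Sum>k=1..n. real k powr s) - real n powr (s+1)/(s+1)) / real n powr (s+1)" for s n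
  have s2: "s + 1 > -1" using s by simp
  have l1: "E s \<longlonglongrightarrow> 0" using E_over[OF s] unfolding E_def .
  have l2: "E (s+1) \<longlonglongrightarrow> 0" using E_over[OF s2] unfolding E_def by (simp add: add.assoc)
  have lim: "(\<lambda>n. 1/(s+1) - 1/(s+2) + E s n - E (s+1) n) \<longlonglongrightarrow> 1/(s+1) - 1/(s+2) + 0 - 0"
    by (intro tendsto_intros l1 l2)
  have eq: "1/(s+1) - 1/(s+2) = 1/((s+1)*(s+2))" using s by (simp add: field_simps)
  show ?thesis
  proof (rule Lim_transform_eventually[OF lim[unfolded eq, simplified]])
    show "\<forall>\<^sub>F n in sequentially. 1/((s+1)*(s+2)) + E s n - E (s+1) n =
        (\<Sum>k=1..n. (real n - real k) * real k powr s) / real n powr (s+2)"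
      using eventually_ge_at_top[of 1]
    proof eventually_elim
      case (elim n)
      have npos: "real n > 0" using elim by simp
      have kk: "(\<Sum>k=1..n. (real n - real k) * real k powr s) =
          real n * (\<Sum>k=1..n. real k powr s) - (\<Sum>k=1..n. real k powr (s+1))"
      proof -
        have "(\<Sum>k=1..n. (real n - real k) * real k powr s) = (\<Sum>k=1..n. real n * real k powr s - real k powr (s+1))"
          by (intro sum.cong) (auto simp: powr_add algebra_simps)
        then show ?thesis by (simp add: sum_subtractf sum_distrib_left)
      qed
      have p1: "real n powr (s+2) = real n * real n powr (s+1)"
      proof -
        have "real n powr (s+2) = real n powr (1 + (s+1))" by (rule arg_cong[where f="\<lambda>x. real n powr x"]) simp
        also have "\<dots> = real n powr 1 * real n powr (s+1)" by (rule powr_add)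
        finally show ?thesis using npos by simp
      qed
      have p2: "real n powr (s+1+1) = real n powr (s+2)" by (simp add: add_ac)
      define S0 where "S0 = (\<Sum>k=1..n. real k powr s)"
      define S1 where "S1 = (\<Sum>k=1..n. real k powr (s+1))"
      define P where "P = real n powr (s+1)"
      have Pp: "P > 0" unfolding P_def using npos by simp
      have e1: "E s n = (S0 - P/(s+1))/P" unfolding E_def S0_def P_def ..
      have e2: "E (s+1) n = (S1 - (real n * P)/(s+2))/(real n * P)"
        unfolding E_def S1_def P_def p1[symmetric] p2[symmetric] by (simp add: add_ac)
      have r1: "(S0 - P/(s+1))/P = S0/P - 1/(s+1)" using Pp by (simp add: diff_divide_distrib)
      have r2: "(S1 - (real n * P)/(s+2))/(real n * P) = S1/(real n * P) - 1/(s+2)"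
        using Pp npos by (simp add: diff_divide_distrib)
      have r3: "(real n * S0 - S1) / (real n * P) = S0/P - S1/(real n * P)"
        using Pp npos by (simp add: diff_divide_distrib)
      have "1/((s+1)*(s+2)) + E s n - E (s+1) n = S0/P - S1/(real n * P)"
        unfolding e1 e2 r1 r2 using eq by linarith
      also have "\<dots> = (real n * S0 - S1) / (real n * P)" using r3 by simp
      also have "\<dots> = (\<Sum>k=1..n. (real n - real k) * real k powr s) / real n powr (s+2)"
        unfolding kk p1 S0_def S1_def P_def ..
      finally show ?case .
    qed
  qed
qed

lemma toeplitz:
  fixes s L :: real and g :: "nat \<Rightarrow> real"
  assumes s: "s > -1" and g: "(\<lambda>k. g k / real k powr s) \<longlonglongrightarrow> L"
  shows "(\<lambda>n. (\<Sum>k=1..n. (real n - real k) * g k) / real n powr (s+2)) \<longlonglongrightarrow> L/((s+1)*(s+2))"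
proof -
  define T where "T n = (\<Sum>k=1..n. (real n - real k) * real k powr s) / real n powr (s+2)" for n
  define c0 where "c0 = 1/((s+1)*(s+2))"
  have Tl: "T \<longlonglongrightarrow> c0" unfolding T_def c0_def by (rule T_lim[OF s])
  have c0pos: "c0 > 0" using s unfolding c0_def by simp
  define e where "e k = g k - L * real k powr s" for k
  have el: "(\<lambda>k. e k / real k powr s) \<longlonglongrightarrow> 0"
  proof -
    have "(\<lambda>k. g k / real k powr s - L) \<longlonglongrightarrow> L - L" by (intro tendsto_intros g)
    then have "(\<lambda>k. g k / real k powr s - L) \<longlonglongrightarrow> 0" by simp
    then show ?thesis
      by (rule Lim_transform_eventually)
         (use eventually_ge_at_top[of 1] in \<open>eventually_elim, simp add: e_def diff_divide_distrib\<close>)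
  qed
  define R where "R n = (\<Sum>k=1..n. (real n - real k) * e k) / real n powr (s+2)" for n
  have Rl: "R \<longlonglongrightarrow> 0"
  proof (rule tendstoI)
    fix eps :: real assume eps: "eps > 0"
    define ep where "ep = eps / (c0 + 3)"
    have ep: "ep > 0" using eps c0pos unfolding ep_def by simp
    from tendstoD[OF el ep] obtain K where K: "\<And>k. k \<ge> K \<Longrightarrow> \<bar>e k / real k powr s\<bar> < ep"
      by (auto simp: eventually_sequentially)
    define A where "A = (\<Sum>k<Suc K. \<bar>e k\<bar>)"
    have s1: "s + 1 > 0" using s by simp
    have ev1: "\<forall>\<^sub>F n in sequentially. T n < c0 + 1"
      using tendstoD[OF Tl zero_less_one] by eventually_elim (auto simp: dist_real_def)
    have ev2: "\<forall>\<^sub>F n in sequentially. A * real n powr (-(s+1)) < ep"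
      using tendstoD[OF npow_neg_lim[of "s+1" A, OF s1] ep] by eventually_elim (auto simp: dist_real_def)
    show "\<forall>\<^sub>F n in sequentially. dist (R n) 0 < eps"
      using ev1 ev2 eventually_ge_at_top[of "Suc K"]
    proof eventually_elim
      case (elim n)
      have npos: "real n > 0" using elim by simp
      have np: "real n powr (s+2) > 0" using npos by simp
      have tb: "\<bar>(real n - real k) * e k\<bar> \<le> real n * (if k \<le> K then \<bar>e k\<bar> else 0) + ep * ((real n - real k) * real k powr s)"
        if k: "k \<in> {1..n}" for k
      proof (cases "k \<le> K")
        case True
        have "\<bar>(real n - real k) * e k\<bar> \<le> real n * \<bar>e k\<bar>"
          using k by (auto simp: abs_mult intro!: mult_right_mono)
        moreover have "ep * ((real n - real k) * real k powr s) \<ge> 0" using k ep by auto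
        ultimately show ?thesis using True by simp
      next
        case False
        have kp: "real k powr s > 0" using k by simp
        have "\<bar>e k\<bar> / real k powr s < ep" using K[of k] False kp by (simp add: abs_divide)
        then have "\<bar>e k\<bar> \<le> ep * real k powr s" using kp by (simp add: pos_divide_less_eq)
        then have "\<bar>(real n - real k) * e k\<bar> \<le> (real n - real k) * (ep * real k powr s)"
          using k by (auto simp: abs_mult intro!: mult_left_mono)
        then show ?thesis using False by (simp add: ac_simps)
      qed
      have "\<bar>\<Sum>k=1..n. (real n - real k) * e k\<bar> \<le> (\<Sum>k=1..n. \<bar>(real n - real k) * e k\<bar>)"
        by (rule sum_abs)
      also have "\<dots> \<le> (\<Sum>k=1..n. real n * (if k \<le> K then \<bar>e k\<bar> else 0) + ep * ((real n - real k) * real k powr s))"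
        by (intro sum_mono tb)
      also have "\<dots> = real n * (\<Sum>k=1..n. (if k \<le> K then \<bar>e k\<bar> else 0)) + ep * (\<Sum>k=1..n. (real n - real k) * real k powr s)"
        by (simp add: sum.distrib sum_distrib_left)
      finally have b0: "\<bar>\<Sum>k=1..n. (real n - real k) * e k\<bar> \<le> real n * (\<Sum>k=1..n. (if k \<le> K then \<bar>e k\<bar> else 0)) + ep * (\<Sum>k=1..n. (real n - real k) * real k powr s)" .
      have "(\<Sum>k=1..n. (if k \<le> K then \<bar>e k\<bar> else 0)) \<le> A"
      proof -
        have "(\<Sum>k=1..n. (if k \<le> K then \<bar>e k\<bar> else 0)) = (\<Sum>k\<in>{1..n} \<inter> {k. k \<le> K}. \<bar>e k\<bar>)"
          by (simp add: sum.inter_restrict)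
        also have "\<dots> \<le> (\<Sum>k<Suc K. \<bar>e k\<bar>)"
          by (intro sum_mono2) auto
        finally show ?thesis unfolding A_def .
      qed
      then have "real n * (\<Sum>k=1..n. (if k \<le> K then \<bar>e k\<bar> else 0)) \<le> real n * A"
        using npos by (intro mult_left_mono) auto
      with b0 have b: "\<bar>\<Sum>k=1..n. (real n - real k) * e k\<bar> \<le> real n * A + ep * (\<Sum>k=1..n. (real n - real k) * real k powr s)"
        by linarith
      have "\<bar>R n\<bar> \<le> (real n * A + ep * (\<Sum>k=1..n. (real n - real k) * real k powr s)) / real n powr (s+2)"
        unfolding R_def using b np by (simp add: abs_divide divide_right_mono)
      also have "\<dots> = A * real n powr (-(s+1)) + ep * T n"
      proof -
        have q1: "real n powr (s+2) = real n * real n powr (s+1)"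
        proof -
          have "real n powr (s+2) = real n powr (1 + (s+1))" by (rule arg_cong[where f="\<lambda>x. real n powr x"]) simp
          also have "\<dots> = real n powr 1 * real n powr (s+1)" by (rule powr_add)
          finally show ?thesis using npos by simp
        qed
        have q2: "real n powr (-(s+1)) = 1 / real n powr (s+1)" by (subst powr_minus) (simp add: divide_inverse)
        show ?thesis unfolding T_def add_divide_distrib q2 using npos
          by (simp add: q1)
      qed
      also have "\<dots> < ep + ep * (c0 + 1)"
        using elim ep by (intro add_strict_left_mono add_less_le_mono) auto
      also have "\<dots> = ep * (c0 + 2)" by (simp add: algebra_simps)
      also have "\<dots> \<le> ep * (c0 + 3)" using ep by (intro mult_left_mono) auto
      also have "\<dots> = eps" unfolding ep_def using c0pos by simp
      finally show ?case by (simp add: dist_real_def)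
    qed
  qed
  have "(\<lambda>n. L * T n + R n) \<longlonglongrightarrow> L * c0 + 0" by (intro tendsto_intros Tl Rl)
  then have lim: "(\<lambda>n. L * T n + R n) \<longlonglongrightarrow> L/((s+1)*(s+2))" by (simp add: c0_def)
  have eqn: "L * T n + R n = (\<Sum>k=1..n. (real n - real k) * g k) / real n powr (s+2)" for n
  proof -
    have "(\<Sum>k=1..n. (real n - real k) * g k) = L * (\<Sum>k=1..n. (real n - real k) * real k powr s) + (\<Sum>k=1..n. (real n - real k) * e k)"
      by (simp add: e_def sum_distrib_left sum.distrib[symmetric] algebra_simps)
    then show ?thesis unfolding T_def R_def by (simp add: add_divide_distrib)
  qed
  show ?thesis using lim unfolding eqn .
qed



definition Dp :: "real \<Rightarrow> nat \<Rightarrow> real" where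
  "Dp p k = (real k + 1) powr p + (real k - 1) powr p - 2 * real k powr p"

lemma Dp_taylor:
  fixes p :: real and k :: nat
  assumes k: "k \<ge> 2"
  shows "\<exists>a b. real k < a \<and> a < real k + 1 \<and> real k - 1 < b \<and> b < real k \<and>
     Dp p k = p * (p-1) * (a powr (p-2) + b powr (p-2)) / 2"
proof -
  define diff where "diff m x = (if m = 0 then x powr p else if m = 1 then p * x powr (p-1) else p*(p-1)*x powr (p-2))" for m :: nat and x :: real
  have D: "\<forall>m t. m < 2 \<and> real k - 1 \<le> t \<and> t \<le> real k + 1 \<longrightarrow> DERIV (diff m) t :> diff (Suc m) t"
  proof (intro allI impI)
    fix m :: nat and t :: real assume a: "m < 2 \<and> real k - 1 \<le> t \<and> t \<le> real k + 1"
    then have tp: "t > 0" using k by auto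
    show "DERIV (diff m) t :> diff (Suc m) t"
    proof (cases "m = 0")
      case True
      then show ?thesis unfolding diff_def using has_real_derivative_powr[OF tp, of p] by simp
    next
      case False
      then have "m = 1" using a by simp
      have "DERIV (\<lambda>x. p * x powr (p-1)) t :> p * ((p-1) * t powr (p-1-1))"
        by (intro DERIV_cmult has_real_derivative_powr tp)
      then show ?thesis unfolding diff_def using \<open>m = 1\<close> by (simp add: algebra_simps)
    qed
  qed
  have D1: "\<forall>m t. m < 2 \<and> real k \<le> t \<and> t \<le> real k + 1 \<longrightarrow> DERIV (diff m) t :> diff (Suc m) t"
    using D by auto
  have D2: "\<forall>m t. m < 2 \<and> real k - 1 \<le> t \<and> t \<le> real k \<longrightarrow> DERIV (diff m) t :> diff (Suc m) t"
    using D by auto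
  have d0: "diff 0 = (\<lambda>x. x powr p)" by (auto simp: diff_def)
  obtain a where a: "real k < a" "a < real k + 1"
    "(real k + 1) powr p = (\<Sum>m<2. (diff m (real k) / fact m) * (real k + 1 - real k)^m) + (diff 2 a / fact 2) * (real k + 1 - real k)^2"
    using Taylor_up[of 2 diff "\<lambda>x. x powr p" "real k" "real k + 1" "real k", OF _ d0 D1] by auto
  obtain b where b: "real k - 1 < b" "b < real k"
    "(real k - 1) powr p = (\<Sum>m<2. (diff m (real k) / fact m) * (real k - 1 - real k)^m) + (diff 2 b / fact 2) * (real k - 1 - real k)^2"
    using Taylor_down[of 2 diff "\<lambda>x. x powr p" "real k - 1" "real k" "real k", OF _ d0 D2] by auto
  have a3: "(real k+1) powr p = real k powr p + p * real k powr (p-1) + p*(p-1)*a powr (p-2)/2"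
    using a(3) by (simp add: diff_def numeral_2_eq_2)
  have b3: "(real k-1) powr p = real k powr p - p * real k powr (p-1) + p*(p-1)*b powr (p-2)/2"
    using b(3) by (simp add: diff_def numeral_2_eq_2)
  have "Dp p k = p * (p-1) * (a powr (p-2) + b powr (p-2)) / 2"
    unfolding Dp_def a3 b3 by (simp add: field_simps)
  then show ?thesis using a b by blast
qed

lemma Dp_lim: "(\<lambda>k. Dp p k / real k powr (p-2)) \<longlonglongrightarrow> p*(p-1)"
proof -
  have "\<forall>k. \<exists>a b. 2 \<le> k \<longrightarrow> (real k < a \<and> a < real k + 1 \<and> real k - 1 < b \<and> b < real k \<and>
     Dp p k = p * (p-1) * (a powr (p-2) + b powr (p-2)) / 2)"
    using Dp_taylor by blast
  then obtain A B where AB: "\<And>k. 2 \<le> k \<Longrightarrow> real k < A k \<and> A k < real k + 1 \<and> real k - 1 < B k \<and> B k < real k \<and>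
     Dp p k = p * (p-1) * (A k powr (p-2) + B k powr (p-2)) / 2"
    by metis
  have inv: "(\<lambda>k::nat. 1 / real k) \<longlonglongrightarrow> 0" by (rule lim_inverse_n')
  have lA: "(\<lambda>k. A k / real k) \<longlonglongrightarrow> 1"
  proof (rule tendsto_sandwich[of "\<lambda>k. 1" _ _ "\<lambda>k. 1 + 1 / real k"])
    show "\<forall>\<^sub>F k in sequentially. 1 \<le> A k / real k"
      using eventually_ge_at_top[of 2] by eventually_elim (frule AB, auto simp: field_simps)
    show "\<forall>\<^sub>F k in sequentially. A k / real k \<le> 1 + 1 / real k"
      using eventually_ge_at_top[of 2] by eventually_elim (frule AB, auto simp: field_simps)
    show "(\<lambda>k. 1 + 1 / real k) \<longlonglongrightarrow> 1" using tendsto_add[OF tendsto_const inv] by simp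
  qed simp
  have lB: "(\<lambda>k. B k / real k) \<longlonglongrightarrow> 1"
  proof (rule tendsto_sandwich[of "\<lambda>k. 1 - 1 / real k" _ _ "\<lambda>k. 1"])
    show "\<forall>\<^sub>F k in sequentially. 1 - 1 / real k \<le> B k / real k"
      using eventually_ge_at_top[of 2]
    proof eventually_elim
      case (elim k)
      have "(real k - 1) / real k \<le> B k / real k" using AB[OF elim] elim by (intro divide_right_mono) auto
      then show ?case using elim by (simp add: diff_divide_distrib)
    qed
    show "\<forall>\<^sub>F k in sequentially. B k / real k \<le> 1"
      using eventually_ge_at_top[of 2] by eventually_elim (frule AB, auto simp: field_simps)
    show "(\<lambda>k. 1 - 1 / real k) \<longlonglongrightarrow> 1" using tendsto_diff[OF tendsto_const inv] by simp
  qed simp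
  have l: "(\<lambda>k. p * (p-1) * ((A k / real k) powr (p-2) + (B k / real k) powr (p-2)) / 2) \<longlonglongrightarrow>
      p * (p-1) * (1 powr (p-2) + 1 powr (p-2)) / 2"
    by (intro tendsto_intros lA lB) auto
  show ?thesis
  proof (rule Lim_transform_eventually[OF l[simplified]])
    show "\<forall>\<^sub>F k in sequentially. p * (p-1) * ((A k / real k) powr (p-2) + (B k / real k) powr (p-2)) / 2 = Dp p k / real k powr (p-2)"
      using eventually_ge_at_top[of 2]
    proof eventually_elim
      case (elim k)
      have pos: "A k > 0" "B k > 0" using AB[OF elim] elim by auto
      have "Dp p k / real k powr (p-2) = p * (p-1) * (A k powr (p-2) / real k powr (p-2) + B k powr (p-2) / real k powr (p-2)) / 2"
      proof -
        have e: "Dp p k = p * (p-1) * (A k powr (p-2) + B k powr (p-2)) / 2" using AB[OF elim] by blast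
        have kp: "real k powr (p-2) > 0" using elim by simp
        show ?thesis unfolding e using kp by (simp add: field_simps)
      qed
      then show ?case using pos by (simp add: powr_divide)
    qed
  qed
qed


lemma const_eq:
  fixes H t :: real
  assumes "3/4 < H" "H < 1" "t > 1"
  shows "4 * (((t/4)^2 * ((2*H*(2*H-1))^2/((4*H-3)*(4*H-2)))
        - 2 * (t/4) * (c_H H/2) * ((2*H*(2*H-1))*((2*H+1)*(2*H))/((4*H-2)*(4*H-1)))
        + (c_H H/2)^2 * (((2*H+1)*(2*H))^2/((4*H-1)*(4*H))))) / (t/2)^2
      = 4 * K0 H t / (k1 t)^2"
proof -
  have h: "4*H-3 \<noteq> 0" "4*H-2 \<noteq> 0" "4*H-1 \<noteq> 0" "H \<noteq> 0" "2*H+1 \<noteq> 0" "t \<noteq> 0" "2*H-1\<noteq>0"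
    "(4*H-3)*(4*H-2) \<noteq> 0" "(4*H-2)*(4*H-1) \<noteq> 0" "(4*H-1)*(4*H) \<noteq> 0" using assms by auto
  have ch: "c_H H / 2 = k2 H" unfolding c_H_def k2_def by simp
  have t4: "t/4 = - k1 t" unfolding k1_def by simp
  have e1: "(2*H*(2*H-1))^2/((4*H-3)*(4*H-2)) = 4 * (H\<^sup>2 * (2*H - 1) / (2*(4*H - 3)))"
    using h by (simp add: field_simps power2_eq_square)
  have e2: "(2*H*(2*H-1))*((2*H+1)*(2*H))/((4*H-2)*(4*H-1)) = 4 * ((H\<^sup>2 * (2*H + 1)) / (2*(4*H - 1)))"
    using h by (simp add: field_simps power2_eq_square)
  have e3: "((2*H+1)*(2*H))^2/((4*H-1)*(4*H)) = 4 * ((H * (2*H + 1)\<^sup>2) / (4*(4*H - 1)))"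
    using h by (simp add: field_simps power2_eq_square)
  have X: "((t/4)^2 * ((2*H*(2*H-1))^2/((4*H-3)*(4*H-2)))
        - 2 * (t/4) * (c_H H/2) * ((2*H*(2*H-1))*((2*H+1)*(2*H))/((4*H-2)*(4*H-1)))
        + (c_H H/2)^2 * (((2*H+1)*(2*H))^2/((4*H-1)*(4*H)))) = 4 * K0 H t"
    unfolding e1 e2 e3 ch t4 K0_def by (simp add: algebra_simps power2_eq_square) (simp add: add_divide_distrib[symmetric])
  have k1t: "(k1 t)^2 = (t/2)^2 / 4" unfolding k1_def by (simp add: power2_eq_square)
  show ?thesis unfolding X k1t using h by (simp add: field_simps)
qed


lemma sq_powr: "k \<ge> 1 \<Longrightarrow> (real k powr q)^2 = real k powr (2*q)"
  by (simp add: power2_eq_square powr_add[symmetric])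

lemma sq_aux:
  fixes w a b A B n d :: real
  assumes "n \<noteq> 0" "d \<noteq> 0"
  shows "w * ((a*A - b*B/n)/d)^2 = (a^2*(w*A^2) - (2*a*b/n)*(w*(A*B)) + (b^2/n^2)*(w*B^2))/d^2"
  using assms by (simp add: power2_eq_square field_simps)

lemma main_lim:
  fixes H t :: real
  assumes H: "3/4 < H" "H < 1" and t: "t > 1"
  defines "rho \<equiv> \<lambda>N m. ((t/4) * Dp (2*H) m - (c_H H/2) * Dp (2*H+1) m / real N) / (t/2 - c_H H / real N)"
  shows "(\<lambda>N. real N powr (4-4*H) * ((1/(real N - 1))^2 * (2 * (real N + 2 * (\<Sum>m=1..N. (real N - real m) * (rho N m)^2)))))
     \<longlonglongrightarrow> 4*K0 H t/(k1 t)^2"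
proof -
  define p where "p = 2*H"
  define p' where "p' = 2*H+1"
  define al where "al = t/4"
  define be where "be = c_H H / 2"
  define den where "den N = t/2 - c_H H / real N" for N :: nat
  define SA where "SA N = (\<Sum>m=1..N. (real N - real m) * (Dp p m)^2)" for N
  define SB where "SB N = (\<Sum>m=1..N. (real N - real m) * (Dp p m * Dp p' m))" for N
  define SC where "SC N = (\<Sum>m=1..N. (real N - real m) * (Dp p' m)^2)" for N
  define LA where "LA = (p*(p-1))^2"
  define LB where "LB = (p*(p-1))*(p'*(p'-1))"
  define LC where "LC = (p'*(p'-1))^2"
  have lDp: "(\<lambda>k. Dp p k / real k powr (p-2)) \<longlonglongrightarrow> p*(p-1)" by (rule Dp_lim)
  have lDp': "(\<lambda>k. Dp p' k / real k powr (p'-2)) \<longlonglongrightarrow> p'*(p'-1)" by (rule Dp_lim)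
  have rA: "(\<lambda>k. (Dp p k)^2 / real k powr (4*H-4)) \<longlonglongrightarrow> LA"
  proof -
    have "(\<lambda>k. (Dp p k / real k powr (p-2))^2) \<longlonglongrightarrow> LA" unfolding LA_def by (intro tendsto_intros lDp)
    then show ?thesis
      by (rule Lim_transform_eventually) (use eventually_ge_at_top[of 1] in
          \<open>eventually_elim, simp add: power_divide sq_powr p_def algebra_simps\<close>)
  qed
  have rB: "(\<lambda>k. (Dp p k * Dp p' k) / real k powr (4*H-3)) \<longlonglongrightarrow> LB"
  proof -
    have "(\<lambda>k. (Dp p k / real k powr (p-2)) * (Dp p' k / real k powr (p'-2))) \<longlonglongrightarrow> LB"
      unfolding LB_def by (intro tendsto_intros lDp lDp')
    then show ?thesis
    proof (rule Lim_transform_eventually)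
      show "\<forall>\<^sub>F k in sequentially. Dp p k / real k powr (p-2) * (Dp p' k / real k powr (p'-2)) = Dp p k * Dp p' k / real k powr (4*H-3)"
        using eventually_ge_at_top[of 1]
      proof eventually_elim
        case (elim k)
        have "real k powr (4*H-3) = real k powr (p-2) * real k powr (p'-2)"
          unfolding p_def p'_def by (simp add: powr_add[symmetric] algebra_simps)
        then show ?case by simp
      qed
    qed
  qed
  have rC: "(\<lambda>k. (Dp p' k)^2 / real k powr (4*H-2)) \<longlonglongrightarrow> LC"
  proof -
    have "(\<lambda>k. (Dp p' k / real k powr (p'-2))^2) \<longlonglongrightarrow> LC" unfolding LC_def by (intro tendsto_intros lDp')
    then show ?thesis
      by (rule Lim_transform_eventually) (use eventually_ge_at_top[of 1] in
          \<open>eventually_elim, simp add: power_divide sq_powr p'_def algebra_simps\<close>)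
  qed
  have tA: "(\<lambda>N. SA N / real N powr (4*H-2)) \<longlonglongrightarrow> LA/((4*H-3)*(4*H-2))"
    using toeplitz[of "4*H-4", OF _ rA] H unfolding SA_def by (simp add: algebra_simps)
  have tB: "(\<lambda>N. SB N / real N powr (4*H-1)) \<longlonglongrightarrow> LB/((4*H-2)*(4*H-1))"
    using toeplitz[of "4*H-3", OF _ rB] H unfolding SB_def by (simp add: algebra_simps)
  have tC: "(\<lambda>N. SC N / real N powr (4*H)) \<longlonglongrightarrow> LC/((4*H-1)*(4*H))"
    using toeplitz[of "4*H-2", OF _ rC] H unfolding SC_def by (simp add: algebra_simps)
  define aN where "aN N = SA N / real N powr (4*H-2)" for N
  define bN where "bN N = SB N / real N powr (4*H-1)" for N
  define cN where "cN N = SC N / real N powr (4*H)" for N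
  have tA': "aN \<longlonglongrightarrow> LA/((4*H-3)*(4*H-2))" using tA unfolding aN_def .
  have tB': "bN \<longlonglongrightarrow> LB/((4*H-2)*(4*H-1))" using tB unfolding bN_def .
  have tC': "cN \<longlonglongrightarrow> LC/((4*H-1)*(4*H))" using tC unfolding cN_def .
  have lden: "den \<longlonglongrightarrow> t/2"
    using tendsto_diff[OF tendsto_const[of "t/2"] tendsto_mult[OF tendsto_const[of "c_H H"] lim_inverse_n']]
    unfolding den_def by simp
  have lN: "(\<lambda>N. real N / (real N - 1)) \<longlonglongrightarrow> 1" by real_asymp
  have l3: "(\<lambda>N::nat. 1 * real N powr (-(4*H-3))) \<longlonglongrightarrow> 0" using H by (intro npow_neg_lim) auto
  have t0: "t/2 \<noteq> 0" using t by simp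
  define F where "F N = 2 * (real N / (real N - 1))^2 * (1 * real N powr (-(4*H-3))) +
     4 * (real N / (real N - 1))^2 * ((al^2 * aN N - 2*al*be*bN N
        + be^2 * cN N) / (den N)^2)" for N
  have lF: "F \<longlonglongrightarrow> 2 * 1^2 * 0 + 4 * 1^2 * ((al^2 * (LA/((4*H-3)*(4*H-2))) - 2*al*be*(LB/((4*H-2)*(4*H-1)))
        + be^2 * (LC/((4*H-1)*(4*H)))) / (t/2)^2)"
    unfolding F_def by (intro tendsto_intros lN l3 tA' tB' tC' lden t0) (use t in simp)
  have cst: "2 * 1^2 * 0 + 4 * 1^2 * ((al^2 * (LA/((4*H-3)*(4*H-2))) - 2*al*be*(LB/((4*H-2)*(4*H-1)))
        + be^2 * (LC/((4*H-1)*(4*H)))) / (t/2)^2) = 4*K0 H t/(k1 t)^2"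
    using const_eq[OF H t] unfolding al_def be_def LA_def LB_def LC_def p_def p'_def by simp
  show ?thesis
  proof (rule Lim_transform_eventually[OF lF[unfolded cst]])
    show "\<forall>\<^sub>F N in sequentially. F N = real N powr (4-4*H) * ((1/(real N - 1))^2 * (2 * (real N + 2 * (\<Sum>m=1..N. (real N - real m) * (rho N m)^2))))"
      using eventually_ge_at_top[of 2]
    proof eventually_elim
      case (elim N)
      have Np: "real N > 0" and N1: "real N - 1 > 0" using elim by auto
      have dp: "den N > 0"
      proof -
        have "c_H H < 1/2" using H unfolding c_H_def by (simp add: field_simps)
        moreover have "c_H H / real N \<le> c_H H"
        proof -
          have c0: "c_H H \<ge> 0" using H unfolding c_H_def by simp
          have "c_H H * 1 \<le> c_H H * real N" using elim c0 by (intro mult_left_mono) auto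
          then show ?thesis using Np by (simp add: divide_le_eq)
        qed
        ultimately show ?thesis using t unfolding den_def by linarith
      qed
      define P where "P = real N powr (4*H)"
      have Pp: "P > 0" unfolding P_def using Np by simp
      have e1: "real N powr (4-4*H) = real N ^ 4 / P"
        unfolding P_def using Np by (simp add: powr_diff powr_numeral)
      have e2: "real N powr (-(4*H-3)) = real N ^ 3 / P"
      proof -
        have "-(4*H-3) = 3 - 4*H" by simp
        then show ?thesis unfolding P_def using Np by (simp add: powr_diff powr_numeral)
      qed
      have e3: "real N powr (4*H-2) = P / real N ^ 2"
        unfolding P_def using Np by (simp add: powr_diff powr_numeral)
      have e4: "real N powr (4*H-1) = P / real N"
        unfolding P_def using Np by (simp add: powr_diff)
      have Qe: "(\<Sum>m=1..N. (real N - real m) * (rho N m)^2) =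
          (al^2 * SA N - 2*al*be*SB N / real N + be^2 * SC N / (real N)^2) / (den N)^2"
      proof -
        have "(\<Sum>m=1..N. (real N - real m) * (rho N m)^2) =
           (\<Sum>m=1..N. (al^2 * ((real N - real m) * (Dp p m)^2) - (2*al*be/real N) * ((real N - real m) * (Dp p m * Dp p' m))
              + (be^2/(real N)^2) * ((real N - real m) * (Dp p' m)^2)) / (den N)^2)"
          by (intro sum.cong refl, unfold rho_def, unfold p'_def[symmetric], unfold den_def[symmetric] al_def[symmetric] be_def[symmetric] p_def[symmetric])
             (rule sq_aux, use Np dp in auto)
        also have "\<dots> = (al^2 * SA N - (2*al*be/real N) * SB N + (be^2/(real N)^2) * SC N) / (den N)^2"
          unfolding SA_def SB_def SC_def
          by (simp add: sum_divide_distrib[symmetric] sum.distrib sum_subtractf sum_distrib_left)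
        finally show ?thesis by simp
      qed
      show ?case unfolding F_def aN_def bN_def cN_def Qe e1 e2 e3 e4 P_def[symmetric] using Np N1 Pp dp
        by (simp add: field_simps) (simp add: eval_nat_numeral algebra_simps)
    qed
  qed
qed



lemma integral_part:
  fixes H t :: real
  assumes H: "3/4 < H" "H < 1"
  shows "((\<lambda>x. (k1 t * H * (2*H - 1) * x powr (2*H - 2) + k2 H * H * (2*H + 1) * x powr (2*H - 1))\<^sup>2
              * (1 - x)) has_integral K0 H t) {0..1}"
proof -
  define a where "a = k1 t * H * (2*H - 1)"
  define b where "b = k2 H * H * (2*H + 1)"
  have i: "((\<lambda>x. x powr e) has_integral (1/(e+1))) {0..1}" if "e > -1" for e :: real
    using has_integral_powr_from_0[OF that, of 1] by simp
  have I: "((\<lambda>x. a^2 * (x powr (4*H-4) - x powr (4*H-3)) + 2*a*b * (x powr (4*H-3) - x powr (4*H-2))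
        + b^2 * (x powr (4*H-2) - x powr (4*H-1))) has_integral
      (a^2 * (1/(4*H-4+1) - 1/(4*H-3+1)) + 2*a*b * (1/(4*H-3+1) - 1/(4*H-2+1)) + b^2 * (1/(4*H-2+1) - 1/(4*H-1+1)))) {0..1}"
    using H by (intro has_integral_add has_integral_diff has_integral_mult_right i) auto
  have val: "a^2 * (1/(4*H-4+1) - 1/(4*H-3+1)) + 2*a*b * (1/(4*H-3+1) - 1/(4*H-2+1)) + b^2 * (1/(4*H-2+1) - 1/(4*H-1+1)) = K0 H t"
  proof -
    have h: "4*H-3 \<noteq> 0" "4*H-2 \<noteq> 0" "4*H-1 \<noteq> 0" "H \<noteq> 0" "2*H-1\<noteq>0"
      "(4*H-3)*(4*H-2) \<noteq> 0" "(4*H-2)*(4*H-1) \<noteq> 0" "(4*H-1)*(4*H) \<noteq> 0" using H by auto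
    have e1: "a^2 * (1/(4*H-4+1) - 1/(4*H-3+1)) = (k1 t)\<^sup>2 * (H\<^sup>2 * (2*H - 1)) / (2*(4*H - 3))"
      unfolding a_def using h by (simp add: field_simps power2_eq_square)
    have e2: "2*a*b * (1/(4*H-3+1) - 1/(4*H-2+1)) = 2 * k1 t * k2 H * (H\<^sup>2 * (2*H + 1)) / (2*(4*H - 1))"
      unfolding a_def b_def using h by (simp add: field_simps power2_eq_square)
    have e3: "b^2 * (1/(4*H-2+1) - 1/(4*H-1+1)) = (k2 H)\<^sup>2 * (H * (2*H + 1)\<^sup>2) / (4*(4*H - 1))"
      unfolding b_def using h by (simp add: field_simps power2_eq_square)
    show ?thesis unfolding e1 e2 e3 K0_def ..
  qed
  have eq: "(k1 t * H * (2*H - 1) * x powr (2*H - 2) + k2 H * H * (2*H + 1) * x powr (2*H - 1))\<^sup>2 * (1 - x)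
      = a^2 * (x powr (4*H-4) - x powr (4*H-3)) + 2*a*b * (x powr (4*H-3) - x powr (4*H-2))
        + b^2 * (x powr (4*H-2) - x powr (4*H-1))" if "x \<in> {0..1}" for x :: real
  proof (cases "x = 0")
    case True then show ?thesis by simp
  next
    case False
    then have xp: "x > 0" using that by auto
    define u where "u = x powr (2*H-2)"
    have pw1: "x powr (e + 1) = x * x powr e" for e using xp by (simp add: powr_add)
    have q1: "x powr (4*H-4) = u*u" unfolding u_def by (simp add: powr_add[symmetric])
    have v: "x powr (2*H-1) = x*u" unfolding u_def using pw1[of "2*H-2"] by (simp add: algebra_simps)
    have q2: "x powr (4*H-3) = x*(u*u)" using pw1[of "4*H-4"] q1 by (simp add: algebra_simps)
    have q3: "x powr (4*H-2) = x*(x*(u*u))" using pw1[of "4*H-3"] q2 by (simp add: algebra_simps)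
    have q4: "x powr (4*H-1) = x*(x*(x*(u*u)))" using pw1[of "4*H-2"] q3 by (simp add: algebra_simps)
    show ?thesis unfolding q1 q2 q3 q4 v u_def[symmetric] a_def[symmetric] b_def[symmetric]
      by (simp add: power2_eq_square algebra_simps)
  qed
  show ?thesis using I unfolding val by (subst has_integral_cong[OF eq]) auto
qed



lemma gauss_char:
  fixes n :: nat and p c :: "nat \<Rightarrow> real" and \<theta> :: real
  assumes P: "prob_space M" and G: "centered_gaussian_process M X S C"
  and pts: "\<forall>k<n. p k \<in> S"
  shows "char (distr M borel (\<lambda>\<omega>. \<Sum>k<n. c k * X (p k) \<omega>)) \<theta> =
     complex_of_real (exp (-(1/2) * \<theta>^2 * (\<Sum>k<n. \<Sum>l<n. c k * c l * C (p k) (p l))))"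
proof -
  interpret prob_space M by (rule P)
  have meas: "X x \<in> borel_measurable M" if "x \<in> S" for x using G that unfolding centered_gaussian_process_def by auto
  have Ym: "(\<lambda>\<omega>. \<Sum>k<n. c k * X (p k) \<omega>) \<in> borel_measurable M"
    using meas pts by (intro borel_measurable_sum borel_measurable_times borel_measurable_const) auto
  have "char (distr M borel (\<lambda>\<omega>. \<Sum>k<n. c k * X (p k) \<omega>)) \<theta> = (CLINT \<omega>|M. iexp (\<theta> * (\<Sum>k<n. c k * X (p k) \<omega>)))"
    unfolding char_def by (subst integral_distr[OF Ym]) auto
  also have "\<dots> = (CLINT \<omega>|M. cis (\<Sum>k<n. (\<theta> * c k) * X (p k) \<omega>))"
    by (simp add: cis_conv_exp sum_distrib_left mult.assoc)
  also have "\<dots> = complex_of_real (exp (-(1/2) * (\<Sum>k<n. \<Sum>l<n. (\<theta> * c k) * (\<theta> * c l) * C (p k) (p l))))"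
  proof -
    have gp: "\<forall>(n::nat) p c. (\<forall>k<n. p k \<in> S) \<longrightarrow> (LINT \<omega>|M. cis (\<Sum>k<n. c k * X (p k) \<omega>)) =
          complex_of_real (exp (-(1/2) * (\<Sum>k<n. \<Sum>l<n. c k * c l * C (p k) (p l))))"
      using G unfolding centered_gaussian_process_def by (rule conjunct2)
    show ?thesis using gp pts by simp
  qed
  also have "(\<Sum>k<n. \<Sum>l<n. (\<theta> * c k) * (\<theta> * c l) * C (p k) (p l)) = \<theta>^2 * (\<Sum>k<n. \<Sum>l<n. c k * c l * C (p k) (p l))"
    by (simp add: sum_distrib_left power2_eq_square mult_ac)
  finally show ?thesis by (simp add: mult.assoc)
qed

lemma gauss_Q_nonneg:
  fixes n :: nat and p c :: "nat \<Rightarrow> real"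
  assumes P: "prob_space M" and G: "centered_gaussian_process M X S C"
  and pts: "\<forall>k<n. p k \<in> S"
  shows "(\<Sum>k<n. \<Sum>l<n. c k * c l * C (p k) (p l)) \<ge> 0"
proof -
  interpret prob_space M by (rule P)
  define Q where "Q = (\<Sum>k<n. \<Sum>l<n. c k * c l * C (p k) (p l))"
  define Y where "Y = (\<lambda>\<omega>. \<Sum>k<n. c k * X (p k) \<omega>)"
  have meas: "X x \<in> borel_measurable M" if "x \<in> S" for x using G that unfolding centered_gaussian_process_def by auto
  have Ym: "Y \<in> borel_measurable M" unfolding Y_def
    using meas pts by (intro borel_measurable_sum borel_measurable_times borel_measurable_const) auto
  interpret D: real_distribution "distr M borel Y" using Ym by simp
  have "norm (char (distr M borel Y) 1) \<le> 1" by (rule D.cmod_char_le_1)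
  moreover have "char (distr M borel Y) 1 = complex_of_real (exp (-(1/2) * Q))"
    using gauss_char[OF P G pts, of c 1] unfolding Y_def Q_def by simp
  ultimately have "exp (-(1/2) * Q) \<le> 1" by simp
  then show ?thesis unfolding Q_def by simp
qed

lemma gauss_moments:
  fixes n :: nat and p c :: "nat \<Rightarrow> real"
  assumes P: "prob_space M" and G: "centered_gaussian_process M X S C"
  and pts: "\<forall>k<n. p k \<in> S"
  defines "Y \<equiv> (\<lambda>\<omega>. \<Sum>k<n. c k * X (p k) \<omega>)" and "Q \<equiv> (\<Sum>k<n. \<Sum>l<n. c k * c l * C (p k) (p l))"
  shows "integrable M (\<lambda>\<omega>. (Y \<omega>)^4) \<and> (LINT \<omega>|M. (Y \<omega>)^4) = 3*Q^2 \<and>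
         integrable M (\<lambda>\<omega>. (Y \<omega>)^2) \<and> (LINT \<omega>|M. (Y \<omega>)^2) = Q"
proof -
  interpret prob_space M by (rule P)
  have Q0: "Q \<ge> 0" unfolding Q_def by (rule gauss_Q_nonneg[OF P G pts])
  define s where "s = sqrt Q"
  have s2: "s^2 = Q" unfolding s_def using Q0 by simp
  have meas: "X x \<in> borel_measurable M" if "x \<in> S" for x using G that unfolding centered_gaussian_process_def by auto
  have Ym[measurable]: "Y \<in> borel_measurable M" unfolding Y_def
    using meas pts by (intro borel_measurable_sum borel_measurable_times borel_measurable_const) auto
  interpret Std: real_distribution std_normal_distribution by (rule real_dist_normal_dist)
  have sm[measurable]: "(\<lambda>x::real. s * x) \<in> borel_measurable borel" by simp
  have sm': "(\<lambda>x::real. s * x) \<in> borel_measurable std_normal_distribution" by simp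
  have eqd: "distr M borel Y = distr std_normal_distribution borel (\<lambda>x. s * x)"
  proof (rule Levy_uniqueness)
    show "real_distribution (distr M borel Y)" using Ym by simp
    show "real_distribution (distr std_normal_distribution borel (\<lambda>x. s * x))"
      using Std.real_distribution_distr[OF sm'] .
    show "char (distr M borel Y) = char (distr std_normal_distribution borel (\<lambda>x. s * x))"
    proof
      fix \<theta> :: real
      have "char (distr std_normal_distribution borel (\<lambda>x. s * x)) \<theta> = (CLINT x|std_normal_distribution. iexp (\<theta> * (s * x)))"
        unfolding char_def by (subst integral_distr[OF sm']) auto
      also have "\<dots> = char std_normal_distribution (\<theta> * s)"
        unfolding char_def by (simp add: mult.assoc)
      also have "\<dots> = complex_of_real (exp (- ((\<theta> * s)^2) / 2))" by (simp add: char_std_normal_distribution)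
      also have "\<dots> = complex_of_real (exp (-(1/2) * \<theta>^2 * Q))"
        using s2 by (simp add: power_mult_distrib)
      also have "\<dots> = char (distr M borel Y) \<theta>"
        unfolding Y_def Q_def using gauss_char[OF P G pts] by simp
      finally show "char (distr M borel Y) \<theta> = char (distr std_normal_distribution borel (\<lambda>x. s * x)) \<theta>" ..
    qed
  qed
  have mom: "integrable M (\<lambda>\<omega>. (Y \<omega>)^(2*k)) \<and> (LINT \<omega>|M. (Y \<omega>)^(2*k)) = s^(2*k) * (fact (2 * k) / (2^k * fact k))" for k :: nat
  proof
    have "integrable M (\<lambda>\<omega>. (Y \<omega>)^(2*k)) \<longleftrightarrow> integrable (distr M borel Y) (\<lambda>x. x^(2*k))"
      by (subst integrable_distr_eq) auto
    also have "\<dots> \<longleftrightarrow> integrable std_normal_distribution (\<lambda>x. (s * x)^(2*k))"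
      unfolding eqd by (subst integrable_distr_eq[OF sm']) auto
    also have "\<dots>" unfolding power_mult_distrib
      by (intro integrable_mult_right std_normal_distribution_even_moments(2))
    finally show "integrable M (\<lambda>\<omega>. (Y \<omega>)^(2*k))" .
    have "(LINT \<omega>|M. (Y \<omega>)^(2*k)) = (LINT x|distr M borel Y. x^(2*k))"
      by (subst integral_distr) auto
    also have "\<dots> = (LINT x|std_normal_distribution. (s * x)^(2*k))"
      unfolding eqd by (subst integral_distr[OF sm']) auto
    also have "\<dots> = s^(2*k) * (LINT x|std_normal_distribution. x^(2*k))"
      unfolding power_mult_distrib by simp
    also have "\<dots> = s^(2*k) * (fact (2 * k) / (2^k * fact k))"
      by (simp add: std_normal_distribution_even_moments(1))
    finally show "(LINT \<omega>|M. (Y \<omega>)^(2*k)) = s^(2*k) * (fact (2 * k) / (2^k * fact k))" .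
  qed
  have s4: "s^4 = Q^2" using s2 by (metis power2_eq_square power_mult numeral_times_numeral semiring_norm(12) num_double power_even_eq)
  show ?thesis using mom[of 2] mom[of 1] s2 s4 by (simp add: fact_numeral)
qed



definition covU :: "(real \<Rightarrow> real \<Rightarrow> real) \<Rightarrow> nat \<Rightarrow> nat \<Rightarrow> nat \<Rightarrow> real" where
  "covU C N i j = C (real i / real N) (real j / real N) - C (real i / real N) ((real j - 1) / real N)
     - C ((real i - 1) / real N) (real j / real N) + C ((real i - 1) / real N) ((real j - 1) / real N)"

lemma pair_moments:
  assumes P: "prob_space M" and G: "centered_gaussian_process M X {0..1} C"
  and sym: "\<And>x y. C x y = C y x"
  and ij: "i \<in> {1..N}" "j \<in> {1..N}"
  shows "integrable M (\<lambda>\<omega>. (a * U_alpha X N i \<omega> + b * U_alpha X N j \<omega>)^4) \<and>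
     (LINT \<omega>|M. (a * U_alpha X N i \<omega> + b * U_alpha X N j \<omega>)^4) = 3*(a^2 * covU C N i i + 2*a*b*covU C N i j + b^2 * covU C N j j)^2 \<and>
     integrable M (\<lambda>\<omega>. (a * U_alpha X N i \<omega> + b * U_alpha X N j \<omega>)^2) \<and>
     (LINT \<omega>|M. (a * U_alpha X N i \<omega> + b * U_alpha X N j \<omega>)^2) = a^2 * covU C N i i + 2*a*b*covU C N i j + b^2 * covU C N j j"
proof -
  define p where "p k = [real i / real N, (real i - 1) / real N, real j / real N, (real j - 1) / real N] ! k" for k
  define c where "c k = [a, -a, b, -b] ! k" for k
  have in01: "real m / real N \<in> {0..1}" "(real m - 1) / real N \<in> {0..1}" if "m \<in> {1..N}" for m
    using that by (auto simp: field_simps)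
  have pts: "\<forall>k<4. p k \<in> {0..1}"
  proof (intro allI impI)
    fix k :: nat assume "k < 4"
    then have "k = 0 \<or> k = 1 \<or> k = 2 \<or> k = 3" by auto
    then show "p k \<in> {0..1}" using in01[OF ij(1)] in01[OF ij(2)] unfolding p_def by auto
  qed
  have Y: "(\<Sum>k<4. c k * X (p k) \<omega>) = a * U_alpha X N i \<omega> + b * U_alpha X N j \<omega>" for \<omega>
    by (simp add: eval_nat_numeral p_def c_def U_alpha_def algebra_simps)
  have Q: "(\<Sum>k<4. \<Sum>l<4. c k * c l * C (p k) (p l)) = a^2 * covU C N i i + 2*a*b*covU C N i j + b^2 * covU C N j j"
    using sym[of "real i / real N" "real j / real N"] sym[of "real i / real N" "(real j - 1) / real N"]
      sym[of "(real i - 1) / real N" "real j / real N"] sym[of "(real i - 1) / real N" "(real j - 1) / real N"]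
      sym[of "real i / real N" "(real i - 1) / real N"] sym[of "real j / real N" "(real j - 1) / real N"]
    by (simp add: eval_nat_numeral p_def c_def covU_def power2_eq_square algebra_simps)
  show ?thesis using gauss_moments[OF P G pts, of c] unfolding Y Q by simp
qed

lemma UU_moment:
  assumes P: "prob_space M" and G: "centered_gaussian_process M X {0..1} C"
  and sym: "\<And>x y. C x y = C y x"
  and ij: "i \<in> {1..N}" "j \<in> {1..N}"
  shows "integrable M (\<lambda>\<omega>. (U_alpha X N i \<omega>)^2 * (U_alpha X N j \<omega>)^2) \<and>
     (LINT \<omega>|M. (U_alpha X N i \<omega>)^2 * (U_alpha X N j \<omega>)^2) = covU C N i i * covU C N j j + 2 * (covU C N i j)^2"
proof -
  define U where "U = U_alpha X N i"
  define V where "V = U_alpha X N j"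
  define ci where "ci = covU C N i i"
  define cj where "cj = covU C N j j"
  define cij where "cij = covU C N i j"
  have m1: "integrable M (\<lambda>\<omega>. (U \<omega> + V \<omega>)^4) \<and> (LINT \<omega>|M. (U \<omega> + V \<omega>)^4) = 3*(ci + 2*cij + cj)^2"
    using pair_moments[OF P G sym ij, of 1 1] unfolding U_def V_def ci_def cj_def cij_def by simp
  have m2: "integrable M (\<lambda>\<omega>. (U \<omega> - V \<omega>)^4) \<and> (LINT \<omega>|M. (U \<omega> - V \<omega>)^4) = 3*(ci - 2*cij + cj)^2"
    using pair_moments[OF P G sym ij, of 1 "-1"] unfolding U_def V_def ci_def cj_def cij_def by simp
  have m3: "integrable M (\<lambda>\<omega>. (U \<omega>)^4) \<and> (LINT \<omega>|M. (U \<omega>)^4) = 3*ci^2"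
    using pair_moments[OF P G sym ij, of 1 0] unfolding U_def V_def ci_def cj_def cij_def by simp
  have m4: "integrable M (\<lambda>\<omega>. (V \<omega>)^4) \<and> (LINT \<omega>|M. (V \<omega>)^4) = 3*cj^2"
    using pair_moments[OF P G sym ij, of 0 1] unfolding U_def V_def ci_def cj_def cij_def by simp
  have eq: "(U \<omega>)^2 * (V \<omega>)^2 = ((U \<omega> + V \<omega>)^4 + (U \<omega> - V \<omega>)^4 - 2*(U \<omega>)^4 - 2*(V \<omega>)^4) / 12" for \<omega>
    by (simp add: power2_eq_square power4_eq_xxxx field_simps)
  have int: "integrable M (\<lambda>\<omega>. ((U \<omega> + V \<omega>)^4 + (U \<omega> - V \<omega>)^4 - 2*(U \<omega>)^4 - 2*(V \<omega>)^4) / 12)"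
    using m1 m2 m3 m4 by (intro integrable_divide integrable_diff integrable_add integrable_mult_right) auto
  have "(LINT \<omega>|M. ((U \<omega> + V \<omega>)^4 + (U \<omega> - V \<omega>)^4 - 2*(U \<omega>)^4 - 2*(V \<omega>)^4) / 12)
      = ((LINT \<omega>|M. (U \<omega> + V \<omega>)^4) + (LINT \<omega>|M. (U \<omega> - V \<omega>)^4) - 2*(LINT \<omega>|M. (U \<omega>)^4) - 2*(LINT \<omega>|M. (V \<omega>)^4)) / 12"
    using m1 m2 m3 m4
    by (simp add: Bochner_Integration.integral_diff Bochner_Integration.integral_add integrable_diff integrable_add integrable_mult_right)
  also have "\<dots> = ci * cj + 2 * cij^2" using m1 m2 m3 m4 by (simp add: power2_eq_square algebra_simps)
  finally have fin: "(LINT \<omega>|M. ((U \<omega> + V \<omega>)^4 + (U \<omega> - V \<omega>)^4 - 2*(U \<omega>)^4 - 2*(V \<omega>)^4) / 12) = ci * cj + 2 * cij^2" .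
  have ef: "(\<lambda>\<omega>. (U \<omega>)^2 * (V \<omega>)^2) = (\<lambda>\<omega>. ((U \<omega> + V \<omega>)^4 + (U \<omega> - V \<omega>)^4 - 2*(U \<omega>)^4 - 2*(V \<omega>)^4) / 12)"
    by (rule ext, rule eq)
  have "integrable M (\<lambda>\<omega>. (U \<omega>)^2 * (V \<omega>)^2) \<and> (LINT \<omega>|M. (U \<omega>)^2 * (V \<omega>)^2) = ci * cj + 2 * cij^2"
    unfolding ef using int fin by blast
  then show ?thesis unfolding U_def V_def ci_def cj_def cij_def .
qed

lemma U2_moment:
  assumes P: "prob_space M" and G: "centered_gaussian_process M X {0..1} C"
  and sym: "\<And>x y. C x y = C y x"
  and i: "i \<in> {1..N}"
  shows "integrable M (\<lambda>\<omega>. (U_alpha X N i \<omega>)^2) \<and> (LINT \<omega>|M. (U_alpha X N i \<omega>)^2) = covU C N i i"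
  using pair_moments[OF P G sym i i, of 1 0] by simp

lemma ff_moment:
  assumes P: "prob_space M" and G: "centered_gaussian_process M X {0..1} C"
  and sym: "\<And>x y. C x y = C y x"
  and ij: "i \<in> {1..N}" "j \<in> {1..N}"
  and nz: "covU C N i i \<noteq> 0" "covU C N j j \<noteq> 0"
  shows "integrable M (\<lambda>\<omega>. ((U_alpha X N i \<omega>)^2 / covU C N i i - 1) * ((U_alpha X N j \<omega>)^2 / covU C N j j - 1)) \<and>
    (LINT \<omega>|M. ((U_alpha X N i \<omega>)^2 / covU C N i i - 1) * ((U_alpha X N j \<omega>)^2 / covU C N j j - 1))
     = 2 * (covU C N i j)^2 / (covU C N i i * covU C N j j)"
proof -
  interpret prob_space M by (rule P)
  define U where "U = U_alpha X N i"
  define V where "V = U_alpha X N j"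
  define a where "a = covU C N i i"
  define b where "b = covU C N j j"
  define c where "c = covU C N i j"
  have m: "integrable M (\<lambda>\<omega>. (U \<omega>)^2 * (V \<omega>)^2) \<and> (LINT \<omega>|M. (U \<omega>)^2 * (V \<omega>)^2) = a * b + 2 * c^2"
    using UU_moment[OF P G sym ij] unfolding U_def V_def a_def b_def c_def .
  have mU: "integrable M (\<lambda>\<omega>. (U \<omega>)^2) \<and> (LINT \<omega>|M. (U \<omega>)^2) = a"
    using U2_moment[OF P G sym ij(1)] unfolding U_def a_def .
  have mV: "integrable M (\<lambda>\<omega>. (V \<omega>)^2) \<and> (LINT \<omega>|M. (V \<omega>)^2) = b"
    using U2_moment[OF P G sym ij(2)] unfolding V_def b_def .
  have a0: "a \<noteq> 0" and b0: "b \<noteq> 0" using nz unfolding a_def b_def by auto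
  have eq: "(\<lambda>\<omega>. ((U \<omega>)^2 / a - 1) * ((V \<omega>)^2 / b - 1)) =
      (\<lambda>\<omega>. ((U \<omega>)^2 * (V \<omega>)^2) / (a*b) - (U \<omega>)^2 / a - (V \<omega>)^2 / b + 1)"
    using a0 b0 by (intro ext) (simp add: field_simps)
  have int: "integrable M (\<lambda>\<omega>. ((U \<omega>)^2 * (V \<omega>)^2) / (a*b) - (U \<omega>)^2 / a - (V \<omega>)^2 / b + 1)"
    using m mU mV by (intro Bochner_Integration.integrable_add Bochner_Integration.integrable_diff integrable_divide_zero) auto
  have "(LINT \<omega>|M. ((U \<omega>)^2 * (V \<omega>)^2) / (a*b) - (U \<omega>)^2 / a - (V \<omega>)^2 / b + 1)
      = (LINT \<omega>|M. (U \<omega>)^2 * (V \<omega>)^2) / (a*b) - (LINT \<omega>|M. (U \<omega>)^2) / a - (LINT \<omega>|M. (V \<omega>)^2) / b + 1"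
    using m mU mV
    by (simp add: Bochner_Integration.integral_diff Bochner_Integration.integral_add integrable_diff integrable_add prob_space)
  also have "\<dots> = 2 * c^2 / (a * b)" using m mU mV a0 b0 by (simp add: field_simps)
  finally show ?thesis using int unfolding eq U_def[symmetric] V_def[symmetric] a_def[symmetric] b_def[symmetric] c_def[symmetric]
    by simp
qed

lemma EV2:
  assumes P: "prob_space M" and G: "centered_gaussian_process M X {0..1} C"
  and sym: "\<And>x y. C x y = C y x"
  and nz: "\<And>i. i \<in> {1..N} \<Longrightarrow> covU C N i i \<noteq> 0"
  shows "(LINT \<omega>|M. (V_N M X N \<omega>)^2) = (1/(real N - 1))^2 *
     (\<Sum>i\<in>{1..N}. \<Sum>j\<in>{1..N}. 2 * (covU C N i j)^2 / (covU C N i i * covU C N j j))"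
proof -
  define f where "f i \<omega> = (U_alpha X N i \<omega>)^2 / covU C N i i - 1" for i \<omega>
  have V: "V_N M X N \<omega> = (1/(real N - 1)) * (\<Sum>i\<in>{1..N}. f i \<omega>)" for \<omega>
    unfolding V_N_def f_def
    by (intro arg_cong[where f="\<lambda>x. (1/(real N - 1)) * x"] sum.cong refl)
       (use U2_moment[OF P G sym] in simp)
  have V2: "(V_N M X N \<omega>)^2 = (1/(real N - 1))^2 * (\<Sum>i\<in>{1..N}. \<Sum>j\<in>{1..N}. f i \<omega> * f j \<omega>)" for \<omega>
    unfolding V by (simp add: power_mult_distrib power2_eq_square sum_product)
  have ff: "integrable M (\<lambda>\<omega>. f i \<omega> * f j \<omega>) \<and> (LINT \<omega>|M. f i \<omega> * f j \<omega>) = 2 * (covU C N i j)^2 / (covU C N i i * covU C N j j)"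
    if "i \<in> {1..N}" "j \<in> {1..N}" for i j
    unfolding f_def using ff_moment[OF P G sym that nz[OF that(1)] nz[OF that(2)]] .
  have "(LINT \<omega>|M. (V_N M X N \<omega>)^2) = (1/(real N - 1))^2 * (LINT \<omega>|M. (\<Sum>i\<in>{1..N}. \<Sum>j\<in>{1..N}. f i \<omega> * f j \<omega>))"
    unfolding V2 by simp
  also have "(LINT \<omega>|M. (\<Sum>i\<in>{1..N}. \<Sum>j\<in>{1..N}. f i \<omega> * f j \<omega>)) = (\<Sum>i\<in>{1..N}. \<Sum>j\<in>{1..N}. (LINT \<omega>|M. f i \<omega> * f j \<omega>))"
  proof -
    have ii: "integrable M (\<lambda>\<omega>. \<Sum>j\<in>{1..N}. f i \<omega> * f j \<omega>)" if "i \<in> {1..N}" for i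
      using ff that by (intro Bochner_Integration.integrable_sum) auto
    have "(LINT \<omega>|M. (\<Sum>i\<in>{1..N}. \<Sum>j\<in>{1..N}. f i \<omega> * f j \<omega>)) = (\<Sum>i\<in>{1..N}. (LINT \<omega>|M. (\<Sum>j\<in>{1..N}. f i \<omega> * f j \<omega>)))"
      using ii by (rule Bochner_Integration.integral_sum)
    also have "\<dots> = (\<Sum>i\<in>{1..N}. \<Sum>j\<in>{1..N}. (LINT \<omega>|M. f i \<omega> * f j \<omega>))"
      using ff by (intro sum.cong refl Bochner_Integration.integral_sum) auto
    finally show ?thesis .
  qed
  also have "\<dots> = (\<Sum>i\<in>{1..N}. \<Sum>j\<in>{1..N}. 2 * (covU C N i j)^2 / (covU C N i i * covU C N j j))"
    using ff by (intro sum.cong refl) auto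
  finally show ?thesis .
qed



definition Gf :: "real \<Rightarrow> real \<Rightarrow> real \<Rightarrow> real" where
  "Gf H t x = c_H H * x powr (2*H+1) - (t/2) * x powr (2*H)"

lemma covU_eq:
  assumes N: "N > 0"
  shows "covU (u_cov H t) N i j = (1/2) * (2 * Gf H t (\<bar>real i - real j\<bar> / real N)
      - Gf H t (\<bar>real i - real j + 1\<bar> / real N) - Gf H t (\<bar>real i - real j - 1\<bar> / real N))"
proof -
  have Np: "real N > 0" using N by simp
  have a1: "\<bar>real i / real N - real j / real N\<bar> = \<bar>real i - real j\<bar> / real N"
    using Np by (simp add: diff_divide_distrib[symmetric] abs_divide)
  have a2: "\<bar>real i / real N - (real j - 1) / real N\<bar> = \<bar>real i - real j + 1\<bar> / real N"
    using Np by (simp add: diff_divide_distrib[symmetric] abs_divide)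
  have a3: "\<bar>(real i - 1) / real N - real j / real N\<bar> = \<bar>real i - real j - 1\<bar> / real N"
    using Np by (simp add: diff_divide_distrib[symmetric] abs_divide)
  have a4: "\<bar>(real i - 1) / real N - (real j - 1) / real N\<bar> = \<bar>real i - real j\<bar> / real N"
    using Np by (simp add: diff_divide_distrib[symmetric] abs_divide)
  show ?thesis unfolding covU_def u_cov_def a1 a2 a3 a4 Gf_def by (simp add: algebra_simps)
qed

lemma Gf_scale:
  assumes "real N > 0" "x \<ge> 0"
  shows "Gf H t (x / real N) = (c_H H * x powr (2*H+1) / real N - (t/2) * x powr (2*H)) / real N powr (2*H)"
proof -
  have "real N powr (2*H+1) = real N powr (2*H) * real N" using assms by (simp add: powr_add)
  then show ?thesis unfolding Gf_def using assms by (simp add: powr_divide field_simps)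
qed

lemma gam_pos:
  assumes m: "m \<ge> 1" and N: "real N > 0"
  shows "(1/2) * (2 * Gf H t (real m / real N) - Gf H t ((real m + 1) / real N) - Gf H t ((real m - 1) / real N))
     = ((t/4) * Dp (2*H) m - (c_H H/2) * Dp (2*H+1) m / real N) / real N powr (2*H)"
  using m N by (simp add: Gf_scale Dp_def field_simps)

lemma gam_zero:
  assumes N: "real N > 0"
  shows "(1/2) * (2 * Gf H t (0 / real N) - Gf H t (1 / real N) - Gf H t (1 / real N))
     = (t/2 - c_H H / real N) / real N powr (2*H)"
  using Gf_scale[OF N, of 1 H t] N by (simp add: Gf_def field_simps)



lemma dsum:
  fixes f :: "nat \<Rightarrow> real"
  shows "(\<Sum>i\<in>{1..N}. \<Sum>j\<in>{1..N}. f (nat \<bar>int i - int j\<bar>)) = real N * f 0 + 2 * (\<Sum>m=1..N. (real N - real m) * f m)"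
proof (induction N)
  case 0 then show ?case by simp
next
  case (Suc N)
  have rev: "(\<Sum>j\<in>{1..N}. f (Suc N - j)) = (\<Sum>m\<in>{1..N}. f m)"
    using sum.atLeastAtMost_rev[of f 1 N] by (simp add: add.commute)
  have r1: "(\<Sum>j\<in>{1..N}. f (nat \<bar>int (Suc N) - int j\<bar>)) = (\<Sum>m\<in>{1..N}. f m)"
    unfolding rev[symmetric] by (intro sum.cong refl arg_cong[where f=f]) (simp add: atLeastAtMost_iff; arith)
  have r2: "(\<Sum>i\<in>{1..N}. f (nat \<bar>int i - int (Suc N)\<bar>)) = (\<Sum>m\<in>{1..N}. f m)"
    unfolding rev[symmetric] by (intro sum.cong refl arg_cong[where f=f]) (simp add: atLeastAtMost_iff; arith)
  have L: "(\<Sum>i\<in>{1..Suc N}. \<Sum>j\<in>{1..Suc N}. f (nat \<bar>int i - int j\<bar>)) =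
      (\<Sum>i\<in>{1..N}. \<Sum>j\<in>{1..N}. f (nat \<bar>int i - int j\<bar>)) + (\<Sum>i\<in>{1..N}. f (nat \<bar>int i - int (Suc N)\<bar>))
      + (\<Sum>j\<in>{1..N}. f (nat \<bar>int (Suc N) - int j\<bar>)) + f 0"
    by (simp add: sum.distrib)
  have R: "(\<Sum>m=1..Suc N. (real (Suc N) - real m) * f m) = (\<Sum>m=1..N. (real N - real m) * f m) + (\<Sum>m=1..N. f m)"
    by (simp add: sum.distrib[symmetric] algebra_simps)
  show ?case unfolding L r1 r2 R Suc.IH by (simp add: algebra_simps)
qed




definition gN :: "real \<Rightarrow> real \<Rightarrow> nat \<Rightarrow> nat \<Rightarrow> real" where
  "gN H t N m = (if m = 0 then (t/2 - c_H H / real N)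
      else ((t/4) * Dp (2*H) m - (c_H H/2) * Dp (2*H+1) m / real N)) / real N powr (2*H)"

lemma covU_g:
  assumes N: "N > 0" and ij: "i \<in> {1..N}" "j \<in> {1..N}"
  shows "covU (u_cov H t) N i j = gN H t N (nat \<bar>int i - int j\<bar>)"
proof -
  have Np: "real N > 0" using N by simp
  define m where "m = nat \<bar>int i - int j\<bar>"
  show ?thesis unfolding covU_eq[OF N] m_def[symmetric]
  proof (cases "i = j")
    case True
    then have "m = 0" unfolding m_def by simp
    then show "(1/2) * (2 * Gf H t (\<bar>real i - real j\<bar> / real N) - Gf H t (\<bar>real i - real j + 1\<bar> / real N)
        - Gf H t (\<bar>real i - real j - 1\<bar> / real N)) = gN H t N m"
      using gam_zero[OF Np, of H t] True Np unfolding gN_def by (simp add: field_simps)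
  next
    case False
    then have m1: "m \<ge> 1" unfolding m_def by simp
    have g: "gN H t N m = (1/2) * (2 * Gf H t (real m / real N) - Gf H t ((real m + 1) / real N) - Gf H t ((real m - 1) / real N))"
      using gam_pos[OF m1 Np, of H t] m1 Np unfolding gN_def by (simp add: field_simps)
    show "(1/2) * (2 * Gf H t (\<bar>real i - real j\<bar> / real N) - Gf H t (\<bar>real i - real j + 1\<bar> / real N)
        - Gf H t (\<bar>real i - real j - 1\<bar> / real N)) = gN H t N m"
    proof (cases "i > j")
      case True
      then have d: "real i - real j = real m" unfolding m_def by simp
      have e1: "\<bar>real i - real j\<bar> = real m" "\<bar>real i - real j + 1\<bar> = real m + 1" "\<bar>real i - real j - 1\<bar> = real m - 1"
        unfolding d using m1 by auto
      show ?thesis unfolding g e1 ..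
    next
      case False
      with \<open>i \<noteq> j\<close> have d: "real i - real j = - real m" unfolding m_def by simp
      have e1: "\<bar>real i - real j\<bar> = real m" "\<bar>real i - real j + 1\<bar> = real m - 1" "\<bar>real i - real j - 1\<bar> = real m + 1"
        unfolding d using m1 by auto
      show ?thesis unfolding g e1 by (simp add: algebra_simps)
    qed
  qed
qed

lemma ratio_aux:
  fixes A d P :: real
  assumes "P \<noteq> 0" "d \<noteq> 0"
  shows "2 * (A/P)^2 / ((d/P) * (d/P)) = 2 * (A/d)^2"
  using assms by (simp add: power2_eq_square field_simps)

lemma EV_formula:
  fixes M :: "'a measure" and X :: "real \<Rightarrow> 'a \<Rightarrow> real" and H t :: real
  assumes P: "prob_space M" and H: "3/4 < H" "H < 1" and t: "t > 1"
    and G: "centered_gaussian_process M X {0..1} (u_cov H t)" and N: "N \<ge> 2"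
  shows "(LINT \<omega>|M. (V_N M X N \<omega>)\<^sup>2) = (1/(real N - 1))^2 * (2 * (real N + 2 * (\<Sum>m=1..N. (real N - real m) *
     (((t/4) * Dp (2*H) m - (c_H H/2) * Dp (2*H+1) m / real N) / (t/2 - c_H H / real N))^2)))"
proof -
  have Np: "real N > 0" and N0: "N > 0" using N by auto
  have sym: "\<And>x y. u_cov H t x y = u_cov H t y x" unfolding u_cov_def by (simp add: abs_minus_commute)
  have dp: "t/2 - c_H H / real N > 0"
  proof -
    have "c_H H < 1/2" using H unfolding c_H_def by (simp add: field_simps)
    moreover have "c_H H / real N \<le> c_H H"
    proof -
      have c0: "c_H H \<ge> 0" using H unfolding c_H_def by simp
      have "c_H H * 1 \<le> c_H H * real N" using N c0 by (intro mult_left_mono) auto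
      then show ?thesis using Np by (simp add: divide_le_eq)
    qed
    ultimately show ?thesis using t by linarith
  qed
  have g0: "gN H t N 0 > 0" unfolding gN_def using dp Np by simp
  have nz: "covU (u_cov H t) N i i \<noteq> 0" if "i \<in> {1..N}" for i
    using covU_g[OF N0 that that] g0 by simp
  define f where "f m = 2 * (gN H t N m)^2 / (gN H t N 0 * gN H t N 0)" for m
  have "(LINT \<omega>|M. (V_N M X N \<omega>)\<^sup>2) = (1/(real N - 1))^2 *
     (\<Sum>i\<in>{1..N}. \<Sum>j\<in>{1..N}. 2 * (covU (u_cov H t) N i j)^2 / (covU (u_cov H t) N i i * covU (u_cov H t) N j j))"
    by (rule EV2[OF P G sym nz])
  also have "(\<Sum>i\<in>{1..N}. \<Sum>j\<in>{1..N}. 2 * (covU (u_cov H t) N i j)^2 / (covU (u_cov H t) N i i * covU (u_cov H t) N j j))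
      = (\<Sum>i\<in>{1..N}. \<Sum>j\<in>{1..N}. f (nat \<bar>int i - int j\<bar>))"
    unfolding f_def by (intro sum.cong refl) (simp add: covU_g[OF N0])
  also have "\<dots> = real N * f 0 + 2 * (\<Sum>m=1..N. (real N - real m) * f m)" by (rule dsum)
  also have "f 0 = 2" unfolding f_def using g0 by (simp add: power2_eq_square)
  also have "(\<Sum>m=1..N. (real N - real m) * f m) = (\<Sum>m=1..N. (real N - real m) * (2 *
     (((t/4) * Dp (2*H) m - (c_H H/2) * Dp (2*H+1) m / real N) / (t/2 - c_H H / real N))^2))"
  proof (intro sum.cong refl)
    fix m assume "m \<in> {1..N}"
    then have m0: "m \<noteq> 0" by simp
    have pp: "real N powr (2*H) > 0" using Np by simp
    show "(real N - real m) * f m = (real N - real m) * (2 *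
     (((t/4) * Dp (2*H) m - (c_H H/2) * Dp (2*H+1) m / real N) / (t/2 - c_H H / real N))^2)"
    proof -
      have "f m = 2 * (((t/4) * Dp (2*H) m - (c_H H/2) * Dp (2*H+1) m / real N) / (t/2 - c_H H / real N))^2"
        unfolding f_def gN_def using m0 by (simp only: if_P[OF refl] if_not_P[OF m0] if_False if_True) (rule ratio_aux, use pp dp in auto)
      then show ?thesis by simp
    qed
  qed
  finally show ?thesis by (simp add: sum_distrib_left algebra_simps)
qed

theorem mainTheorem7:
  fixes M :: "'a measure" and X :: "real \<Rightarrow> 'a \<Rightarrow> real" and H t :: real
  assumes "prob_space M"
    and "3/4 < H" and "H < 1" and "t > 1"
    and "centered_gaussian_process M X {0..1} (u_cov H t)"
  shows "((\<lambda>x. (k1 t * H * (2*H - 1) * x powr (2*H - 2) + k2 H * H * (2*H + 1) * x powr (2*H - 1))\<^sup>2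
              * (1 - x)) has_integral K0 H t) {0..1}
     \<and> (\<lambda>N::nat. real N powr (4 - 4*H) * (LINT \<omega>|M. (V_N M X N \<omega>)\<^sup>2))
          \<longlonglongrightarrow> 4 * K0 H t / (k1 t)\<^sup>2"
proof
  show "((\<lambda>x. (k1 t * H * (2*H - 1) * x powr (2*H - 2) + k2 H * H * (2*H + 1) * x powr (2*H - 1))\<^sup>2
              * (1 - x)) has_integral K0 H t) {0..1}"
    using integral_part[OF assms(2,3)] .
  have lim: "(\<lambda>N. real N powr (4-4*H) * ((1/(real N - 1))^2 * (2 * (real N + 2 * (\<Sum>m=1..N. (real N - real m) *
     (((t/4) * Dp (2*H) m - (c_H H/2) * Dp (2*H+1) m / real N) / (t/2 - c_H H / real N))^2)))))
     \<longlonglongrightarrow> 4*K0 H t/(k1 t)^2"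
    using main_lim[OF assms(2,3,4)] by simp
  show "(\<lambda>N::nat. real N powr (4 - 4*H) * (LINT \<omega>|M. (V_N M X N \<omega>)\<^sup>2)) \<longlonglongrightarrow> 4 * K0 H t / (k1 t)\<^sup>2"
    using lim
  proof (rule Lim_transform_eventually)
    show "\<forall>\<^sub>F N in sequentially. real N powr (4-4*H) * ((1/(real N - 1))^2 * (2 * (real N + 2 * (\<Sum>m=1..N. (real N - real m) *
     (((t/4) * Dp (2*H) m - (c_H H/2) * Dp (2*H+1) m / real N) / (t/2 - c_H H / real N))^2)))) =
      real N powr (4 - 4*H) * (LINT \<omega>|M. (V_N M X N \<omega>)\<^sup>2)"
      using eventually_ge_at_top[of 2]
      by eventually_elim (simp only: EV_formula[OF assms(1,2,3,4,5)])
  qed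
qed


end
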